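(* Let $T$ be a discrete space, let $\alpha T=T\cup\{\infty\}$ be its Alexandroff (one-point) compactification, and let $f:\alpha T\to\mathbb R$ be a Baire one function. Then there exists a countable set $S\subseteq T$ such that $f$ is constant on $\alpha T\setminus S$.
   Context: In $\alpha T$ the points of $T$ are isolated and the neighbourhoods of $\infty$ are the sets $\alpha T\setminus E$ with $E\subseteq T$ finite. A function is Baire one if it is the pointwise limit of a sequence of continuous real functions. *)

theory Defs
  imports "HOL-Analysis.Analysis"
begin

text \<open>The one-point (Alexandroff) compactification of a discrete space with
carrier T: points are Some t (t in T) together with the point at infinity None.\<close>

definition alpha_carrier :: "'a set \<Rightarrow> 'a option set" where
  "alpha_carrier T = insert None (Some ` T)"

definition alexandroff_discrete :: "'a set \<Rightarrow> 'a option topology" where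
  "alexandroff_discrete T = topology (\<lambda>U. U \<subseteq> alpha_carrier T \<and>
      (None \<in> U \<longrightarrow> finite (alpha_carrier T - U)))"

definition baire_one :: "'b topology \<Rightarrow> ('b \<Rightarrow> real) \<Rightarrow> bool" where
  "baire_one X f \<longleftrightarrow> (\<exists>g :: nat \<Rightarrow> 'b \<Rightarrow> real.
      (\<forall>n. continuous_map X euclideanreal (g n)) \<and>
      (\<forall>x \<in> topspace X. (\<lambda>n. g n x) \<longlonglongrightarrow> f x))"

end

theory Submission
  imports Defs
begin

lemma istop_alex: "istopology (\<lambda>U. U \<subseteq> alpha_carrier T \<and>
      (None \<in> U \<longrightarrow> finite (alpha_carrier T - U)))"
  unfolding istopology_def
proof (rule conjI; intro allI impI)
  fix S Ta :: "'a option set"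
  assume a: "S \<subseteq> alpha_carrier T \<and> (None \<in> S \<longrightarrow> finite (alpha_carrier T - S))"
     and b: "Ta \<subseteq> alpha_carrier T \<and> (None \<in> Ta \<longrightarrow> finite (alpha_carrier T - Ta))"
  have "alpha_carrier T - (S \<inter> Ta) = (alpha_carrier T - S) \<union> (alpha_carrier T - Ta)" by blast
  moreover have "None \<in> S \<inter> Ta \<Longrightarrow> finite ((alpha_carrier T - S) \<union> (alpha_carrier T - Ta))"
    using a b by blast
  moreover have "S \<inter> Ta \<subseteq> alpha_carrier T" using a by blast
  ultimately show "S \<inter> Ta \<subseteq> alpha_carrier T \<and> (None \<in> S \<inter> Ta \<longrightarrow> finite (alpha_carrier T - S \<inter> Ta))"
    by simp
next
  fix K :: "'a option set set"
  assume k: "\<forall>S\<in>K. S \<subseteq> alpha_carrier T \<and> (None \<in> S \<longrightarrow> finite (alpha_carrier T - S))"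
  show "\<Union> K \<subseteq> alpha_carrier T \<and> (None \<in> \<Union> K \<longrightarrow> finite (alpha_carrier T - \<Union> K))"
  proof (intro conjI impI)
    show "\<Union> K \<subseteq> alpha_carrier T" using k by blast
  next
    assume "None \<in> \<Union> K"
    then obtain U where "U \<in> K" "None \<in> U" by blast
    then have "finite (alpha_carrier T - U)" using k by blast
    moreover have "alpha_carrier T - \<Union> K \<subseteq> alpha_carrier T - U" using \<open>U \<in> K\<close> by blast
    ultimately show "finite (alpha_carrier T - \<Union> K)" by (rule finite_subset[rotated])
  qed
qed

lemma openin_alex: "openin (alexandroff_discrete T) U \<longleftrightarrow> U \<subseteq> alpha_carrier T \<and>
      (None \<in> U \<longrightarrow> finite (alpha_carrier T - U))"
  unfolding alexandroff_discrete_def using istop_alex topology_inverse' by metis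

lemma topspace_alex: "topspace (alexandroff_discrete T) = alpha_carrier T"
proof -
  have "openin (alexandroff_discrete T) (alpha_carrier T)" by (simp add: openin_alex)
  then have "alpha_carrier T \<subseteq> topspace (alexandroff_discrete T)" by (rule openin_subset)
  moreover have "topspace (alexandroff_discrete T) \<subseteq> alpha_carrier T"
    unfolding topspace_def using openin_alex by blast
  ultimately show ?thesis by blast
qed

lemma cont_countable:
  assumes "continuous_map (alexandroff_discrete T) euclideanreal h"
  shows "countable {t \<in> T. h (Some t) \<noteq> h None}"
proof -
  have fin: "finite {t \<in> T. \<bar>h (Some t) - h None\<bar> \<ge> 1 / real (Suc k)}" for k
  proof -
    let ?U = "{x \<in> topspace (alexandroff_discrete T). h x \<in> ball (h None) (1 / real (Suc k))}"
    have ob: "openin euclideanreal (ball (h None) (1 / real (Suc k)))" by simp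
    have "openin (alexandroff_discrete T) ?U"
      by (rule openin_continuous_map_preimage[OF assms ob])
    moreover have "None \<in> ?U" by (simp add: topspace_alex alpha_carrier_def)
    ultimately have "finite (alpha_carrier T - ?U)" using openin_alex[of T ?U] by blast
    then have "finite (the ` (alpha_carrier T - ?U))" by (rule finite_imageI)
    moreover have "{t \<in> T. \<bar>h (Some t) - h None\<bar> \<ge> 1 / real (Suc k)} \<subseteq> the ` (alpha_carrier T - ?U)"
    proof
      fix t assume t: "t \<in> {t \<in> T. \<bar>h (Some t) - h None\<bar> \<ge> 1 / real (Suc k)}"
      have c: "Some t \<in> alpha_carrier T" using t by (simp add: alpha_carrier_def)
      have "\<not> dist (h None) (h (Some t)) < 1 / real (Suc k)"
        using t by (simp add: dist_real_def abs_minus_commute)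
      then have "Some t \<notin> ?U" by simp
      with c have "Some t \<in> alpha_carrier T - ?U" by blast
      then have "the (Some t) \<in> the ` (alpha_carrier T - ?U)" by (rule imageI)
      then show "t \<in> the ` (alpha_carrier T - ?U)" by simp
    qed
    ultimately show ?thesis by (rule finite_subset[rotated])
  qed
  have "{t \<in> T. h (Some t) \<noteq> h None} \<subseteq> (\<Union>k. {t \<in> T. \<bar>h (Some t) - h None\<bar> \<ge> 1 / real (Suc k)})"
  proof
    fix t assume t: "t \<in> {t \<in> T. h (Some t) \<noteq> h None}"
    then have "\<bar>h (Some t) - h None\<bar> > 0" by simp
    then obtain k where "inverse (real (Suc k)) < \<bar>h (Some t) - h None\<bar>"
      using reals_Archimedean by blast
    then have "1 / real (Suc k) \<le> \<bar>h (Some t) - h None\<bar>" by (simp add: inverse_eq_divide)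
    then show "t \<in> (\<Union>k. {t \<in> T. \<bar>h (Some t) - h None\<bar> \<ge> 1 / real (Suc k)})"
      using t by auto
  qed
  moreover have "countable (\<Union>k. {t \<in> T. \<bar>h (Some t) - h None\<bar> \<ge> 1 / real (Suc k)})"
    by (rule countable_UN[OF countableI_type countable_finite[OF fin]])
  ultimately show ?thesis by (rule countable_subset)
qed

theorem lemma3p1:
  fixes T :: "'a set" and f :: "'a option \<Rightarrow> real"
  assumes "baire_one (alexandroff_discrete T) f"
  shows "\<exists>S. S \<subseteq> T \<and> countable S \<and>
           (\<exists>c. \<forall>x \<in> alpha_carrier T - Some ` S. f x = c)"
proof -
  obtain g :: "nat \<Rightarrow> 'a option \<Rightarrow> real" where
    gc: "\<And>n. continuous_map (alexandroff_discrete T) euclideanreal (g n)" and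
    gl: "\<And>x. x \<in> alpha_carrier T \<Longrightarrow> (\<lambda>n. g n x) \<longlonglongrightarrow> f x"
    using assms unfolding baire_one_def topspace_alex by auto
  define S where "S = (\<Union>n. {t \<in> T. g n (Some t) \<noteq> g n None})"
  have "countable S" unfolding S_def by (rule countable_UN[OF countableI_type cont_countable[OF gc]])
  moreover have "S \<subseteq> T" unfolding S_def by blast
  moreover have "\<forall>x \<in> alpha_carrier T - Some ` S. f x = f None"
  proof
    fix x assume x: "x \<in> alpha_carrier T - Some ` S"
    show "f x = f None"
    proof (cases x)
      case None then show ?thesis by simp
    next
      case (Some t)
      with x have tT: "t \<in> T" and tS: "t \<notin> S" by (auto simp: alpha_carrier_def)
      then have eq: "g n (Some t) = g n None" for n unfolding S_def by blast
      have "(\<lambda>n. g n x) \<longlonglongrightarrow> f x" using gl x by blast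
      moreover have "(\<lambda>n. g n x) \<longlonglongrightarrow> f None"
        using gl[of None] eq Some by (simp add: alpha_carrier_def)
      ultimately show ?thesis using LIMSEQ_unique by blast
    qed
  qed
  ultimately show ?thesis by blast
qed

end
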